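(* Let $(X,r)$ be a finite simple solution of the YBE such that $|X|$ is not a prime number. Then $(X,r)$ is irretractable.
   Context: A solution of the Yang–Baxter equation (YBE) is a pair $(X,r)$ where $X$ is a nonempty set and $r:X\times X\to X\times X$ is a map, written $r(x,y)=(\sigma_x(y),\gamma_y(x))$, such that $r^2=\mathrm{id}$, all maps $\sigma_x,\gamma_x:X\to X$ are bijective, and $r_{12}r_{23}r_{12}=r_{23}r_{12}r_{23}$ on $X^3$, where $r_{12}=r\times\mathrm{id}_X$, $r_{23}=\mathrm{id}_X\times r$. $(X,r)$ is irretractable if $\sigma_x\neq\sigma_y$ for all distinct $x,y\in X$. If $(Y,s)$ is another solution with $s(t,z)=(\sigma'_t(z),\gamma'_z(t))$, a homomorphism of solutions $f:(X,r)\to(Y,s)$ is a map $f:X\to Y$ with $f(\sigma_x(y))=\sigma'_{f(x)}(f(y))$ for all $x,y$; epimorphism = surjective homomorphism, isomorphism = bijective homomorphism. $(X,r)$ is simple if $|X|>1$ and every epimorphism of solutions $f:(X,r)\to(Y,s)$ is either an isomorphism or satisfies $|Y|=1$. *)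

theory Defs
  imports "HOL-Computational_Algebra.Primes"
begin

definition ybe_sigma :: "('a \<times> 'a \<Rightarrow> 'a \<times> 'a) \<Rightarrow> 'a \<Rightarrow> 'a \<Rightarrow> 'a" where
  "ybe_sigma r x y = fst (r (x, y))"

definition ybe_gamma :: "('a \<times> 'a \<Rightarrow> 'a \<times> 'a) \<Rightarrow> 'a \<Rightarrow> 'a \<Rightarrow> 'a" where
  "ybe_gamma r y x = snd (r (x, y))"

definition ybe_solution :: "'a set \<Rightarrow> ('a \<times> 'a \<Rightarrow> 'a \<times> 'a) \<Rightarrow> bool" where
  "ybe_solution X r \<longleftrightarrow>
     X \<noteq> {} \<and>
     (\<forall>x\<in>X. \<forall>y\<in>X. r (x, y) \<in> X \<times> X) \<and>
     (\<forall>x\<in>X. \<forall>y\<in>X. r (r (x, y)) = (x, y)) \<and>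
     (\<forall>x\<in>X. bij_betw (ybe_sigma r x) X X) \<and>
     (\<forall>x\<in>X. bij_betw (ybe_gamma r x) X X) \<and>
     (\<forall>x\<in>X. \<forall>y\<in>X. \<forall>z\<in>X.
        (let r12 = (\<lambda>(a, b, c). (let (p, q) = r (a, b) in (p, q, c)));
             r23 = (\<lambda>(a, b, c). (let (p, q) = r (b, c) in (a, p, q)))
         in r12 (r23 (r12 (x, y, z))) = r23 (r12 (r23 (x, y, z)))))"

definition irretractable :: "'a set \<Rightarrow> ('a \<times> 'a \<Rightarrow> 'a \<times> 'a) \<Rightarrow> bool" where
  "irretractable X r \<longleftrightarrow>
     (\<forall>x\<in>X. \<forall>y\<in>X. x \<noteq> y \<longrightarrow> (\<exists>z\<in>X. ybe_sigma r x z \<noteq> ybe_sigma r y z))"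

definition ybe_hom ::
  "'a set \<Rightarrow> ('a \<times> 'a \<Rightarrow> 'a \<times> 'a) \<Rightarrow> 'b set \<Rightarrow> ('b \<times> 'b \<Rightarrow> 'b \<times> 'b) \<Rightarrow> ('a \<Rightarrow> 'b) \<Rightarrow> bool" where
  "ybe_hom X r Y s f \<longleftrightarrow>
     (\<forall>x\<in>X. f x \<in> Y) \<and>
     (\<forall>x\<in>X. \<forall>y\<in>X. f (ybe_sigma r x y) = ybe_sigma s (f x) (f y))"

text \<open>Simplicity. Target solutions range over solutions on subsets of the same
  type as X.\<close>

definition ybe_simple :: "'a set \<Rightarrow> ('a \<times> 'a \<Rightarrow> 'a \<times> 'a) \<Rightarrow> bool" where
  "ybe_simple X r \<longleftrightarrow>
     (\<exists>x\<in>X. \<exists>y\<in>X. x \<noteq> y) \<and>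
     (\<forall>(Y :: 'a set) s f. ybe_solution Y s \<longrightarrow> ybe_hom X r Y s f \<longrightarrow> f ` X = Y \<longrightarrow>
        inj_on f X \<or> (\<exists>y. Y = {y}))"

end

theory Submission
  imports Defs "HOL-Library.FuncSet"
begin

lemma ybe_comp:
  "(let r12 = (\<lambda>(a, b, c). (let (p, q) = r (a, b) in (p, q, c)));
        r23 = (\<lambda>(a, b, c). (let (p, q) = r (b, c) in (a, p, q)))
    in r12 (r23 (r12 (x, y, z))) = r23 (r12 (r23 (x, y, z)))) \<longleftrightarrow>
   (ybe_sigma r (ybe_sigma r x y) (ybe_sigma r (ybe_gamma r y x) z) = ybe_sigma r x (ybe_sigma r y z) \<and>
    ybe_gamma r (ybe_sigma r (ybe_gamma r y x) z) (ybe_sigma r x y)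
       = ybe_sigma r (ybe_gamma r (ybe_sigma r y z) x) (ybe_gamma r z y) \<and>
    ybe_gamma r z (ybe_gamma r y x) = ybe_gamma r (ybe_gamma r z y) (ybe_gamma r (ybe_sigma r y z) x))"
  by (simp add: Let_def split_def ybe_sigma_def ybe_gamma_def prod_eq_iff)

lemma funpow_period:
  assumes "bij_betw g X X" "finite X"
  shows "\<exists>m>0. \<forall>x\<in>X. (g ^^ m) x = x"
proof -
  define F where "F k = restrict (g ^^ k) X" for k :: nat
  have "F k \<in> X \<rightarrow>\<^sub>E X" for k
    using bij_betw_funpow[OF assms(1), of k] by (auto simp: F_def bij_betw_def)
  hence "range F \<subseteq> X \<rightarrow>\<^sub>E X" by auto
  moreover have "finite (X \<rightarrow>\<^sub>E X)" using assms(2) by (simp add: finite_PiE)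
  ultimately have "finite (range F)" by (rule finite_subset)
  hence "\<not> inj F" using finite_imageD infinite_UNIV_nat by blast
  then obtain i j where ij: "i < j" "F i = F j"
    by (metis injI linorder_neqE_nat)
  have "(g ^^ (j - i)) x = x" if "x \<in> X" for x
  proof -
    have inj: "inj_on (g ^^ i) X" using bij_betw_funpow[OF assms(1), of i] by (auto simp: bij_betw_def)
    have "(g ^^ j) x = (g ^^ i) x" using ij(2) that unfolding F_def by (metis restrict_apply')
    moreover have "(g ^^ j) x = (g ^^ i) ((g ^^ (j - i)) x)"
      using ij(1) by (metis add_diff_inverse_nat comp_apply funpow_add less_imp_not_less)
    moreover have "(g ^^ (j - i)) x \<in> X" using bij_betw_funpow[OF assms(1), of "j-i"] that
      by (auto simp: bij_betw_def)
    ultimately show ?thesis using inj that by (metis inj_on_def)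
  qed
  thus ?thesis using ij(1) by (intro exI[of _ "j - i"]) auto
qed

locale ybe_fin =
  fixes X :: "'a set" and r :: "'a \<times> 'a \<Rightarrow> 'a \<times> 'a"
  assumes sol: "ybe_solution X r" and fin: "finite X"
begin

abbreviation "\<sigma> \<equiv> ybe_sigma r"
abbreviation "\<gamma> \<equiv> ybe_gamma r"

lemma sbij: "x \<in> X \<Longrightarrow> bij_betw (\<sigma> x) X X" using sol by (simp add: ybe_solution_def)
lemma gbij: "x \<in> X \<Longrightarrow> bij_betw (\<gamma> x) X X" using sol by (simp add: ybe_solution_def)

lemma sX[simp]: "x \<in> X \<Longrightarrow> y \<in> X \<Longrightarrow> \<sigma> x y \<in> X"
  using sbij bij_betwE by blast
lemma gX[simp]: "x \<in> X \<Longrightarrow> y \<in> X \<Longrightarrow> \<gamma> x y \<in> X"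
  using gbij bij_betwE by blast

lemma invol: "x \<in> X \<Longrightarrow> y \<in> X \<Longrightarrow> \<sigma> (\<sigma> x y) (\<gamma> y x) = x \<and> \<gamma> (\<gamma> y x) (\<sigma> x y) = y"
proof -
  assume a: "x \<in> X" "y \<in> X"
  have "r (r (x, y)) = (x, y)" using sol a by (simp add: ybe_solution_def)
  moreover have "r (x, y) = (\<sigma> x y, \<gamma> y x)" by (simp add: ybe_sigma_def ybe_gamma_def)
  moreover have "r (\<sigma> x y, \<gamma> y x) = (\<sigma> (\<sigma> x y) (\<gamma> y x), \<gamma> (\<gamma> y x) (\<sigma> x y))"
    by (simp add: ybe_sigma_def ybe_gamma_def)
  ultimately show ?thesis by simp
qed

lemma ybe1: "x \<in> X \<Longrightarrow> y \<in> X \<Longrightarrow> z \<in> X \<Longrightarrow>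
   \<sigma> (\<sigma> x y) (\<sigma> (\<gamma> y x) z) = \<sigma> x (\<sigma> y z)"
  using sol unfolding ybe_solution_def ybe_comp by blast

definition "sinv x = inv_into X (\<sigma> x)"

lemma sinv_X[simp]: "x \<in> X \<Longrightarrow> y \<in> X \<Longrightarrow> sinv x y \<in> X"
  unfolding sinv_def by (metis bij_betw_def inv_into_into sbij)
lemma sinv1[simp]: "x \<in> X \<Longrightarrow> y \<in> X \<Longrightarrow> sinv x (\<sigma> x y) = y"
  unfolding sinv_def by (meson bij_betw_def inv_into_f_f sbij)
lemma sinv2[simp]: "x \<in> X \<Longrightarrow> y \<in> X \<Longrightarrow> \<sigma> x (sinv x y) = y"
  unfolding sinv_def by (metis bij_betw_def f_inv_into_f sbij)
lemma s_inj: "x \<in> X \<Longrightarrow> y \<in> X \<Longrightarrow> z \<in> X \<Longrightarrow> \<sigma> x y = \<sigma> x z \<Longrightarrow> y = z"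
  by (metis sinv1)

lemma gamma_eq: "x \<in> X \<Longrightarrow> y \<in> X \<Longrightarrow> \<gamma> y x = sinv (\<sigma> x y) x"
  by (metis gX invol sX sinv1)

lemma cycle: "a \<in> X \<Longrightarrow> b \<in> X \<Longrightarrow> w \<in> X \<Longrightarrow>
  \<sigma> a (\<sigma> (sinv a b) w) = \<sigma> b (\<sigma> (sinv b a) w)"
proof -
  assume a: "a \<in> X" "b \<in> X" "w \<in> X"
  define y where "y = sinv a b"
  have y: "y \<in> X" "\<sigma> a y = b" using a by (auto simp: y_def)
  have "\<gamma> y a = sinv b a" using gamma_eq[of a y] y a by simp
  thus ?thesis using ybe1[of a y w] y a by (simp add: y_def)
qed

definition "eqv x y \<longleftrightarrow> (\<forall>z\<in>X. \<sigma> x z = \<sigma> y z)"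

lemma eqv_refl: "eqv x x" by (simp add: eqv_def)
lemma eqv_sym: "eqv x y \<Longrightarrow> eqv y x" by (simp add: eqv_def)
lemma eqv_trans: "eqv x y \<Longrightarrow> eqv y z \<Longrightarrow> eqv x z" by (simp add: eqv_def)

lemma eqv_sinv: "eqv x y \<Longrightarrow> x \<in> X \<Longrightarrow> y \<in> X \<Longrightarrow> z \<in> X \<Longrightarrow> sinv x z = sinv y z"
  by (metis eqv_def sinv1 sinv2 sinv_X)

lemma congA: "eqv x y \<Longrightarrow> x \<in> X \<Longrightarrow> y \<in> X \<Longrightarrow> z \<in> X \<Longrightarrow> eqv (sinv z x) (sinv z y)"
proof -
  assume e: "eqv x y" and a: "x \<in> X" "y \<in> X" "z \<in> X"
  have "\<sigma> (sinv z x) w = \<sigma> (sinv z y) w" if w: "w \<in> X" for w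
  proof -
    have 1: "\<sigma> z (\<sigma> (sinv z x) w) = \<sigma> x (\<sigma> (sinv x z) w)" using cycle[of z x w] a w by blast
    have si: "sinv x z = sinv y z" using eqv_sinv[OF e a] .
    have v: "\<sigma> (sinv y z) w \<in> X" using a w by simp
    have 2: "\<sigma> x (\<sigma> (sinv x z) w) = \<sigma> y (\<sigma> (sinv y z) w)"
      using e v si unfolding eqv_def by metis
    have 3: "\<sigma> y (\<sigma> (sinv y z) w) = \<sigma> z (\<sigma> (sinv z y) w)" using cycle[of y z w] a w by blast
    have "\<sigma> z (\<sigma> (sinv z x) w) = \<sigma> z (\<sigma> (sinv z y) w)" using 1 2 3 by simp
    moreover have "\<sigma> (sinv z x) w \<in> X" "\<sigma> (sinv z y) w \<in> X" using a w by simp_all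
    ultimately show ?thesis using s_inj[OF a(3)] by blast
  qed
  thus ?thesis unfolding eqv_def by blast
qed

lemma sinv_bij: "z \<in> X \<Longrightarrow> bij_betw (sinv z) X X"
  unfolding sinv_def by (simp add: bij_betw_inv_into sbij)

lemma congB: "eqv x y \<Longrightarrow> x \<in> X \<Longrightarrow> y \<in> X \<Longrightarrow> z \<in> X \<Longrightarrow> eqv (\<sigma> z x) (\<sigma> z y)"
proof -
  assume a: "eqv x y" "x \<in> X" "y \<in> X" "z \<in> X"
  define g where "g = sinv z"
  obtain m where m: "m > 0" "\<forall>x\<in>X. (g ^^ m) x = x"
    using funpow_period[OF sinv_bij[OF a(4)] fin] g_def by auto
  have gX: "(g ^^ k) u \<in> X" if "u \<in> X" for k u
    using bij_betw_funpow[OF sinv_bij[OF a(4)], of k] that g_def by (auto simp: bij_betw_def)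
  have pres: "eqv ((g ^^ k) x) ((g ^^ k) y)" for k
  proof (induct k)
    case 0 then show ?case using a by simp
  next
    case (Suc k) then show ?case using congA[of "(g ^^ k) x" "(g ^^ k) y" z] gX a
      by (simp add: g_def)
  qed
  have bk: "(g ^^ (m - 1)) u = \<sigma> z u" if "u \<in> X" for u
  proof -
    have "(g ^^ (m - 1)) u = (g ^^ (m - 1)) (g (\<sigma> z u))" using that a by (simp add: g_def)
    also have "\<dots> = (g ^^ m) (\<sigma> z u)"
      using m(1) by (metis Suc_diff_1 comp_apply funpow_Suc_right)
    also have "\<dots> = \<sigma> z u" using m(2) that a by simp
    finally show ?thesis .
  qed
  show ?thesis using pres[of "m - 1"] bk a by simp
qed

lemma cong_s: "eqv x x' \<Longrightarrow> eqv y y' \<Longrightarrow> x \<in> X \<Longrightarrow> x' \<in> X \<Longrightarrow> y \<in> X \<Longrightarrow> y' \<in> X \<Longrightarrow>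
   eqv (\<sigma> x y) (\<sigma> x' y')"
proof -
  assume a: "eqv x x'" "eqv y y'" "x \<in> X" "x' \<in> X" "y \<in> X" "y' \<in> X"
  have "\<sigma> x y = \<sigma> x' y" using a(1,5) unfolding eqv_def by blast
  moreover have "eqv (\<sigma> x' y) (\<sigma> x' y')" using congB a by blast
  ultimately show ?thesis by simp
qed

lemma cong_g: "eqv x x' \<Longrightarrow> eqv y y' \<Longrightarrow> x \<in> X \<Longrightarrow> x' \<in> X \<Longrightarrow> y \<in> X \<Longrightarrow> y' \<in> X \<Longrightarrow>
   eqv (\<gamma> y x) (\<gamma> y' x')"
proof -
  assume a: "eqv x x'" "eqv y y'" "x \<in> X" "x' \<in> X" "y \<in> X" "y' \<in> X"
  have u: "eqv (\<sigma> x y) (\<sigma> x' y')" using cong_s a by blast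
  have "sinv (\<sigma> x y) x = sinv (\<sigma> x' y') x" using eqv_sinv[OF u] a by simp
  moreover have "eqv (sinv (\<sigma> x' y') x) (sinv (\<sigma> x' y') x')" using congA a by simp
  moreover have "\<gamma> y x = sinv (\<sigma> x y) x" using gamma_eq a by blast
  moreover have "\<gamma> y' x' = sinv (\<sigma> x' y') x'" using gamma_eq a by blast
  ultimately show ?thesis by simp
qed


lemma ybe_all: "x \<in> X \<Longrightarrow> y \<in> X \<Longrightarrow> z \<in> X \<Longrightarrow>
   (\<sigma> (\<sigma> x y) (\<sigma> (\<gamma> y x) z) = \<sigma> x (\<sigma> y z) \<and>
    \<gamma> (\<sigma> (\<gamma> y x) z) (\<sigma> x y) = \<sigma> (\<gamma> (\<sigma> y z) x) (\<gamma> z y) \<and>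
    \<gamma> z (\<gamma> y x) = \<gamma> (\<gamma> z y) (\<gamma> (\<sigma> y z) x))"
  using sol unfolding ybe_solution_def ybe_comp by blast

definition "pi x = (SOME y. y \<in> X \<and> eqv y x)"

lemma pi: "x \<in> X \<Longrightarrow> pi x \<in> X \<and> eqv (pi x) x"
  unfolding pi_def by (rule someI[of _ x]) (simp add: eqv_refl)

lemma piX[simp]: "x \<in> X \<Longrightarrow> pi x \<in> X" using pi by blast

lemma pi_eq: "x \<in> X \<Longrightarrow> y \<in> X \<Longrightarrow> pi x = pi y \<longleftrightarrow> eqv x y"
proof
  assume a: "x \<in> X" "y \<in> X" "pi x = pi y"
  then show "eqv x y" using pi[of x] pi[of y] by (metis eqv_sym eqv_trans)
next
  assume a: "x \<in> X" "y \<in> X" "eqv x y"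
  have "(\<lambda>z. z \<in> X \<and> eqv z x) = (\<lambda>z. z \<in> X \<and> eqv z y)"
    using a by (metis eqv_sym eqv_trans)
  then show "pi x = pi y" unfolding pi_def by simp
qed

lemma key_s[simp]: "a \<in> X \<Longrightarrow> b \<in> X \<Longrightarrow> pi (\<sigma> (pi a) (pi b)) = pi (\<sigma> a b)"
  using pi_eq cong_s pi by simp

lemma key_g[simp]: "a \<in> X \<Longrightarrow> b \<in> X \<Longrightarrow> pi (\<gamma> (pi b) (pi a)) = pi (\<gamma> b a)"
  using pi_eq cong_g pi by simp

definition "sr = (\<lambda>(u, v). (pi (\<sigma> u v), pi (\<gamma> v u)))"

lemma sr_sigma: "ybe_sigma sr u = (\<lambda>v. pi (\<sigma> u v))"
  by (simp add: ybe_sigma_def sr_def fun_eq_iff)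
lemma sr_gamma: "ybe_gamma sr v = (\<lambda>u. pi (\<gamma> v u))"
  by (simp add: ybe_gamma_def sr_def fun_eq_iff)

lemma sr_pi: "a \<in> X \<Longrightarrow> b \<in> X \<Longrightarrow> sr (pi a, pi b) = (pi (\<sigma> a b), pi (\<gamma> b a))"
  by (simp add: sr_def)

lemma finite_surj_bij: "finite A \<Longrightarrow> f ` A = A \<Longrightarrow> bij_betw f A A"
  by (simp add: bij_betw_def eq_card_imp_inj_on)

lemma ret_sol_aux: "pi ` X \<noteq> {} \<and>
     (\<forall>x\<in>pi ` X. \<forall>y\<in>pi ` X. sr (x, y) \<in> pi ` X \<times> pi ` X) \<and>
     (\<forall>x\<in>pi ` X. \<forall>y\<in>pi ` X. sr (sr (x, y)) = (x, y)) \<and>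
     (\<forall>x\<in>pi ` X. bij_betw (ybe_sigma sr x) (pi ` X) (pi ` X)) \<and>
     (\<forall>x\<in>pi ` X. bij_betw (ybe_gamma sr x) (pi ` X) (pi ` X))"
proof (intro conjI ballI)
  show "pi ` X \<noteq> {}" using sol by (simp add: ybe_solution_def)
next
  fix u v assume "u \<in> pi ` X" "v \<in> pi ` X"
  then obtain a b where ab: "a \<in> X" "b \<in> X" "u = pi a" "v = pi b" by blast
  show "sr (u, v) \<in> pi ` X \<times> pi ` X" using ab sr_pi by simp
  show "sr (sr (u, v)) = (u, v)" using ab invol[of a b] by (simp add: sr_pi)
next
  fix u assume "u \<in> pi ` X"
  then obtain a where a: "a \<in> X" "u = pi a" by blast
  have "(\<lambda>v. pi (\<sigma> u v)) ` pi ` X = (\<lambda>b. pi (\<sigma> a b)) ` X"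
    unfolding image_image using a by (intro image_cong) auto
  also have "\<dots> = pi ` \<sigma> a ` X" by (simp add: image_image)
  also have "\<sigma> a ` X = X" using sbij[OF a(1)] by (simp add: bij_betw_def)
  finally show "bij_betw (ybe_sigma sr u) (pi ` X) (pi ` X)"
    unfolding sr_sigma using fin by (intro finite_surj_bij) auto
  have "(\<lambda>v. pi (\<gamma> u v)) ` pi ` X = (\<lambda>b. pi (\<gamma> a b)) ` X"
    unfolding image_image using a by (intro image_cong) auto
  also have "\<dots> = pi ` \<gamma> a ` X" by (simp add: image_image)
  also have "\<gamma> a ` X = X" using gbij[OF a(1)] by (simp add: bij_betw_def)
  finally show "bij_betw (ybe_gamma sr u) (pi ` X) (pi ` X)"
    unfolding sr_gamma using fin by (intro finite_surj_bij) auto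
qed

lemma sr_ybe: "\<forall>u\<in>pi ` X. \<forall>v\<in>pi ` X. \<forall>w\<in>pi ` X.
   ybe_sigma sr (ybe_sigma sr u v) (ybe_sigma sr (ybe_gamma sr v u) w) = ybe_sigma sr u (ybe_sigma sr v w) \<and>
    ybe_gamma sr (ybe_sigma sr (ybe_gamma sr v u) w) (ybe_sigma sr u v) =
    ybe_sigma sr (ybe_gamma sr (ybe_sigma sr v w) u) (ybe_gamma sr w v) \<and>
    ybe_gamma sr w (ybe_gamma sr v u) = ybe_gamma sr (ybe_gamma sr w v) (ybe_gamma sr (ybe_sigma sr v w) u)"
proof (intro ballI)
  fix u v w assume "u \<in> pi ` X" "v \<in> pi ` X" "w \<in> pi ` X"
  then obtain a b c where abc: "a \<in> X" "b \<in> X" "c \<in> X" "u = pi a" "v = pi b" "w = pi c" by blast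
  show "ybe_sigma sr (ybe_sigma sr u v) (ybe_sigma sr (ybe_gamma sr v u) w) = ybe_sigma sr u (ybe_sigma sr v w) \<and>
    ybe_gamma sr (ybe_sigma sr (ybe_gamma sr v u) w) (ybe_sigma sr u v) =
    ybe_sigma sr (ybe_gamma sr (ybe_sigma sr v w) u) (ybe_gamma sr w v) \<and>
    ybe_gamma sr w (ybe_gamma sr v u) = ybe_gamma sr (ybe_gamma sr w v) (ybe_gamma sr (ybe_sigma sr v w) u)"
    using ybe_all[OF abc(1-3)] abc by (simp add: sr_sigma sr_gamma)
qed

lemma ret_sol: "ybe_solution (pi ` X) sr"
  unfolding ybe_solution_def ybe_comp using ret_sol_aux sr_ybe by blast

lemma ret_hom: "ybe_hom X r (pi ` X) sr pi"
  unfolding ybe_hom_def by (simp add: sr_sigma)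

lemma ret_dichotomy:
  assumes "ybe_simple X r"
  shows "(\<forall>x\<in>X. \<forall>y\<in>X. eqv x y \<longrightarrow> x = y) \<or> (\<forall>x\<in>X. \<forall>y\<in>X. eqv x y)"
proof -
  have "inj_on pi X \<or> (\<exists>y. pi ` X = {y})"
    using assms ret_sol ret_hom unfolding ybe_simple_def by blast
  thus ?thesis
  proof
    assume "inj_on pi X" thus ?thesis using pi_eq by (metis inj_on_def)
  next
    assume "\<exists>y. pi ` X = {y}"
    then obtain y0 where "pi ` X = {y0}" by blast
    hence "\<forall>x\<in>X. pi x = y0" by blast
    thus ?thesis using pi_eq by metis
  qed
qed
end


lemma perm_sol:
  assumes g: "bij_betw g Y Y" and ne: "Y \<noteq> {}"
  shows "ybe_solution Y (\<lambda>(u, v). (g v, inv_into Y g u))"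
proof -
  define s where "s = (\<lambda>(u::'a, v::'a). (g v, inv_into Y g u))"
  have S: "ybe_sigma s u v = g v" for u v by (simp add: s_def ybe_sigma_def)
  have G: "ybe_gamma s v u = inv_into Y g u" for u v by (simp add: s_def ybe_gamma_def)
  have gY: "u \<in> Y \<Longrightarrow> g u \<in> Y" for u using g bij_betwE by blast
  have iY: "u \<in> Y \<Longrightarrow> inv_into Y g u \<in> Y" for u using g by (metis bij_betw_def inv_into_into)
  have i1: "u \<in> Y \<Longrightarrow> inv_into Y g (g u) = u" for u using g by (meson bij_betw_def inv_into_f_f)
  have i2: "u \<in> Y \<Longrightarrow> g (inv_into Y g u) = u" for u using g by (metis bij_betw_def f_inv_into_f)
  have "ybe_solution Y s"
    unfolding ybe_solution_def ybe_comp S G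
  proof (intro conjI ballI)
    show "Y \<noteq> {}" by fact
  next
    fix x y assume "x \<in> Y" "y \<in> Y"
    thus "s (x, y) \<in> Y \<times> Y" "s (s (x, y)) = (x, y)" by (simp_all add: s_def gY iY i1 i2)
  next
    fix x assume "x \<in> Y"
    show "bij_betw g Y Y" by fact
    show "bij_betw (inv_into Y g) Y Y" using g by (rule bij_betw_inv_into)
  next
    fix x y z assume "x \<in> Y" "y \<in> Y" "z \<in> Y"
    thus "g (g z) = g (g z)" "inv_into Y g (g y) = g (inv_into Y g y)"
      "inv_into Y g (inv_into Y g x) = inv_into Y g (inv_into Y g x)" by (simp_all add: i1 i2)
  qed
  thus ?thesis by (simp add: s_def)
qed

lemma perm_not_simple:
  fixes X :: "'a set" and r h
  assumes fin: "finite X" and simp: "ybe_simple X r" and np: "\<not> prime (card X)"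
    and hb: "bij_betw h X X" and hs: "\<forall>x\<in>X. \<forall>y\<in>X. ybe_sigma r x y = h y"
  shows False
proof -
  obtain x0 y0 where xy: "x0 \<in> X" "y0 \<in> X" "x0 \<noteq> y0" using simp unfolding ybe_simple_def by blast
  have simp2: "\<And>(Y :: 'a set) s (f :: 'a \<Rightarrow> 'a). ybe_solution Y s \<Longrightarrow> ybe_hom X r Y s f \<Longrightarrow> f ` X = Y \<Longrightarrow>
        inj_on f X \<or> (\<exists>y. Y = {y})" using simp unfolding ybe_simple_def by blast
  define n where "n = card X"
  have n2: "n \<ge> 2"
  proof -
    have "{x0, y0} \<subseteq> X" using xy by auto
    hence "card {x0, y0} \<le> n" using fin n_def card_mono by blast
    thus ?thesis using xy by simp
  qed
  then obtain a where a: "a dvd n" "a \<noteq> 1" "a \<noteq> n" using np n_def prime_nat_iff by auto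
  have a1: "1 < a" "a < n"
  proof -
    have "a \<noteq> 0" proof assume "a = 0" thus False using a(1) n2 by simp qed
    moreover have "a \<le> n" using a(1) n2 by (simp add: dvd_imp_le)
    ultimately show "1 < a" "a < n" using a(2,3) by auto
  qed
  define Orb where "Orb i = (h ^^ i) x0" for i
  have OX: "Orb i \<in> X" for i using bij_betw_funpow[OF hb, of i] xy(1) by (auto simp: Orb_def bij_betw_def)
  have OS: "Orb (Suc i) = h (Orb i)" for i by (simp add: Orb_def)
  obtain m where m: "m > 0" "\<forall>x\<in>X. (h ^^ m) x = x" using funpow_period[OF hb fin] by blast
  have ex: "\<exists>m. 0 < m \<and> Orb m = x0" using m xy(1) by (auto simp: Orb_def)
  define d where "d = (LEAST m. 0 < m \<and> Orb m = x0)"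
  have d: "0 < d" "Orb d = x0" using LeastI_ex[OF ex] d_def by auto
  have dl: "0 < k \<Longrightarrow> k < d \<Longrightarrow> Orb k \<noteq> x0" for k using not_less_Least[of k] d_def by blast
  have injO: "inj_on Orb {0..<d}" unfolding Orb_def
    by (rule inj_on_funpow_least) (use d dl in \<open>auto simp: Orb_def\<close>)
  have Oq: "(h ^^ (d * q)) x0 = x0" for q
  proof (induct q)
    case 0 then show ?case by simp
  next
    case (Suc q)
    have "(h ^^ (d * Suc q)) x0 = (h ^^ d) ((h ^^ (d * q)) x0)"
      by (simp add: funpow_add add.commute)
    thus ?case using Suc d(2) by (simp add: Orb_def)
  qed
  have Omod: "Orb i = Orb (i mod d)" for i
  proof -
    have "Orb i = (h ^^ (i mod d)) ((h ^^ (d * (i div d))) x0)"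
      unfolding Orb_def funpow_add[symmetric, THEN fun_cong, simplified comp_def]
      by (metis add.commute div_mult_mod_eq mult.commute)
    thus ?thesis using Oq by (simp add: Orb_def)
  qed
  define C where "C = Orb ` {..<d}"
  have CX: "C \<subseteq> X" using OX C_def by auto
  have x0C: "x0 \<in> C" using d C_def by (metis Orb_def funpow_0 image_eqI lessThan_iff)
  have Cinv: "h y \<in> C \<longleftrightarrow> y \<in> C" if y: "y \<in> X" for y
  proof
    assume "y \<in> C"
    then obtain i where "y = Orb i" by (auto simp: C_def)
    hence "h y = Orb (Suc i)" using OS by simp
    also have "\<dots> = Orb (Suc i mod d)" by (rule Omod)
    finally have "h y = Orb (Suc i mod d)" .
    thus "h y \<in> C" using d(1) C_def by auto
  next
    assume "h y \<in> C"
    then obtain i where i: "h y = Orb i" by (auto simp: C_def)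
    define y' where "y' = Orb (i + d - 1)"
    have "h y' = Orb (i + d)" using d(1) OS unfolding y'_def by (metis Suc_diff_1 add_gr_0 add_diff_assoc2 le_add2 less_eq_Suc_le Suc_eq_plus1)
    also have "\<dots> = Orb i" using Omod by (metis mod_add_self2)
    finally have "h y' = h y" using i by simp
    hence "y = y'" using hb y OX unfolding y'_def bij_betw_def inj_on_def by metis
    moreover have "Orb (i + d - 1) = Orb ((i + d - 1) mod d)" by (rule Omod)
    moreover have "(i + d - 1) mod d < d" using d(1) by simp
    ultimately show "y \<in> C" unfolding C_def y'_def by (metis image_eqI lessThan_iff)
  qed
  show False
  proof (cases "C = X")
    case False
    then obtain q where q: "q \<in> X" "q \<notin> C" using CX by blast
    define Y where "Y = {x0, q}"
    define f where "f y = (if y \<in> C then x0 else q)" for y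
    have sol: "ybe_solution Y (\<lambda>(u, v). (id v, inv_into Y id u))"
      by (rule perm_sol) (auto simp: Y_def bij_betw_id[unfolded id_def])
    have hom: "ybe_hom X r Y (\<lambda>(u, v). (id v, inv_into Y id u)) f"
      unfolding ybe_hom_def using hs Cinv by (auto simp: Y_def f_def ybe_sigma_def)
    have im: "f ` X = Y" using q x0C xy(1) by (auto simp: Y_def f_def)
    have "x0 \<noteq> q" using q x0C by auto
    hence ns: "\<not> (\<exists>y. Y = {y})" by (auto simp: Y_def doubleton_eq_iff)
    have "card Y = 2" using \<open>x0 \<noteq> q\<close> by (simp add: Y_def)
    hence "\<not> inj_on f X" using im a1 n_def card_image by fastforce
    thus False using simp2[OF sol hom im] ns by blast
  next
    case True
    have cd: "card X = d" using True injO C_def by (metis atLeast0LessThan card_image card_lessThan)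
    have ad: "a dvd d" "a < d" "1 < a" using a a1 cd n_def by auto
    define idx where "idx y = (SOME i. i < d \<and> Orb i = y)" for y
    have idx: "idx y < d \<and> Orb (idx y) = y" if "y \<in> X" for y
    proof -
      have "\<exists>i. i < d \<and> Orb i = y" using that True C_def by auto
      thus ?thesis unfolding idx_def by (rule someI_ex)
    qed
    have idxO: "idx (Orb i) = i" if "i < d" for i
    proof -
      have "idx (Orb i) < d" "Orb (idx (Orb i)) = Orb i" using idx[OF OX[of i]] by auto
      moreover have "idx (Orb i) \<in> {0..<d}" "i \<in> {0..<d}" using that \<open>idx (Orb i) < d\<close> by auto
      ultimately show ?thesis using injO unfolding inj_on_def by blast
    qed
    define Y where "Y = Orb ` {..<a}"
    define f where "f y = Orb (idx y mod a)" for y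
    define g where "g u = Orb (Suc (idx u) mod a)" for u
    have gO: "g (Orb j) = Orb (Suc j mod a)" if "j < a" for j using idxO[of j] that ad by (simp add: g_def)
    have "g ` Y = Y"
    proof
      show "g ` Y \<subseteq> Y" using gO ad by (auto simp: Y_def)
      show "Y \<subseteq> g ` Y"
      proof
        fix u assume "u \<in> Y"
        then obtain k where k: "k < a" "u = Orb k" by (auto simp: Y_def)
        define j where "j = (k + a - 1) mod a"
        have "j < a" using ad by (simp add: j_def)
        have "Suc j mod a = Suc (k + a - 1) mod a" by (simp add: j_def mod_Suc_eq)
        also have "\<dots> = k" using ad k by simp
        finally have "g (Orb j) = u" using gO[OF \<open>j < a\<close>] k by simp
        thus "u \<in> g ` Y" using \<open>j < a\<close> Y_def by blast
      qed
    qed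
    moreover have "finite Y" unfolding Y_def by simp
    ultimately have gb: "bij_betw g Y Y" using eq_card_imp_inj_on[of Y g] by (simp add: bij_betw_def)
    have Yne: "Y \<noteq> {}" using ad by (auto simp: Y_def)
    have sol: "ybe_solution Y (\<lambda>(u, v). (g v, inv_into Y g u))" by (rule perm_sol[OF gb Yne])
    have fh: "f (h y) = g (f y)" if y: "y \<in> X" for y
    proof -
      define i where "i = idx y"
      have i: "i < d" "y = Orb i" using idx[OF y] unfolding i_def by auto
      have "h y = Orb (Suc i)" unfolding i(2) by (rule OS[symmetric])
      also have "\<dots> = Orb (Suc i mod d)" by (rule Omod)
      finally have "h y = Orb (Suc i mod d)" .
      hence "f (h y) = Orb (Suc i mod d mod a)" using idxO d(1) by (simp add: f_def)
      also have "\<dots> = Orb (Suc i mod a)" using mod_mod_cancel[OF ad(1)] by simp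
      finally have 1: "f (h y) = Orb (Suc i mod a)" .
      have "f y = Orb (i mod a)" using i idxO by (simp add: f_def)
      hence "g (f y) = Orb (Suc (i mod a) mod a)" using gO ad by simp
      thus ?thesis using 1 by (simp add: mod_Suc_eq)
    qed
    have hom: "ybe_hom X r Y (\<lambda>(u, v). (g v, inv_into Y g u)) f"
    proof -
      have fY: "f y \<in> Y" for y unfolding f_def Y_def using ad by auto
      have sS: "ybe_sigma (\<lambda>(u, v). (g v, inv_into Y g u)) u v = g v" for u v
        by (simp add: ybe_sigma_def)
      have "\<forall>x\<in>X. \<forall>y\<in>X. f (ybe_sigma r x y) = g (f y)"
      proof (intro ballI)
        fix x y assume "x \<in> X" "y \<in> X"
        hence "ybe_sigma r x y = h y" using hs by blast
        thus "f (ybe_sigma r x y) = g (f y)" using fh[OF \<open>y \<in> X\<close>] by simp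
      qed
      thus ?thesis unfolding ybe_hom_def sS using fY by blast
    qed
    have im: "f ` X = Y"
    proof
      show "f ` X \<subseteq> Y" using ad by (auto simp: Y_def f_def)
      show "Y \<subseteq> f ` X"
      proof
        fix u assume "u \<in> Y"
        then obtain k where k: "k < a" "u = Orb k" unfolding Y_def by blast
        have "idx (Orb k) = k" using idxO[of k] k(1) ad(2) by simp
        hence "f (Orb k) = u" using k by (simp add: f_def)
        thus "u \<in> f ` X" using OX by blast
      qed
    qed
    have "Orb 0 \<noteq> Orb 1"
    proof
      assume "Orb 0 = Orb 1"
      moreover have "(0::nat) \<in> {0..<d}" "(1::nat) \<in> {0..<d}" using ad by auto
      ultimately have "(0::nat) = 1" using inj_onD[OF injO] by blast
      thus False by simp
    qed
    moreover have "Orb 0 \<in> Y" "Orb 1 \<in> Y" using ad unfolding Y_def by auto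
    ultimately have ns: "\<not> (\<exists>y. Y = {y})" by (metis singletonD)
    have "card Y \<le> a" unfolding Y_def using card_image_le[of "{..<a}" Orb] by simp
    have "\<not> inj_on f X"
    proof
      assume "inj_on f X"
      hence "card (f ` X) = card X" by (rule card_image)
      thus False using im cd ad \<open>card Y \<le> a\<close> by simp
    qed
    thus False using simp2[OF sol hom im] ns by blast
  qed
qed

theorem mainTheorem2:
  fixes X :: "'a set" and r :: "'a \<times> 'a \<Rightarrow> 'a \<times> 'a"
  assumes "ybe_solution X r"
    and "finite X"
    and "ybe_simple X r"
    and "\<not> prime (card X :: nat)"
  shows "irretractable X r"
proof -
  interpret ybe_fin X r using assms(1,2) by unfold_locales
  show ?thesis
  proof (cases "\<forall>x\<in>X. \<forall>y\<in>X. eqv x y \<longrightarrow> x = y")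
    case True
    thus ?thesis unfolding irretractable_def eqv_def by blast
  next
    case False
    hence all: "\<forall>x\<in>X. \<forall>y\<in>X. eqv x y" using ret_dichotomy[OF assms(3)] by blast
    obtain x0 where x0: "x0 \<in> X" using assms(3) unfolding ybe_simple_def by blast
    have "\<forall>x\<in>X. \<forall>y\<in>X. ybe_sigma r x y = \<sigma> x0 y" using all x0 unfolding eqv_def by blast
    with perm_not_simple[OF assms(2,3,4) sbij[OF x0]] show ?thesis by blast
  qed
qed

end
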